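(* Let $\mathbb{F}\in\{\mathbb{R},\mathbb{C}\}$, let $A$ be an $n\times m$ matrix over $\mathbb{F}$, and let $p\in[1,\infty)$, $q\in(1,\infty]$. Then $A\in\mathcal{E}_{\infty,1}(p,q)$ if and only if there is a vector $v\in\mathbb{F}^m$ such that (i) $v$ is an eigenvector of $A^*A$; (ii) all entries of $v$ have absolute value $1$; (iii) all entries of $Av$ have the same absolute value $\tau$; and (iv) $\tau=m^{1/p}n^{-1/q}\|A\|_{p,q}$. In particular, $A\in\mathcal{E}_{\infty,1}(2,2)$ if and only if $A^*A$ has an eigenvector $v$ with properties (ii) and (iii) which corresponds to its largest eigenvalue.
   Context: $\|x\|_p$ is the Hölder $\ell_p$ norm; $\|A\|_{p,q}=\max_{x\in\mathbb{F}^m,x\ne0}\|Ax\|_q/\|x\|_p$ (for real $A$ one may use $\mathbb{F}=\mathbb{R}$ or $\mathbb{C}$, all vectors being taken over the chosen field); $1/\infty=0$; $A^*$ is the conjugate transpose. For $p\in[1,\infty)$, $q\in(1,\infty]$, $\mathcal{E}_{\infty,1}(p,q)$ is the set of $n\times m$ matrices $A$ with $\|A\|_{r,s}=m^{(1/p)-(1/r)}n^{(1/s)-(1/q)}\|A\|_{p,q}$ for all $r\in(p,\infty]$ and $s\in[1,q)$. *)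

theory Defs
  imports "HOL-Analysis.Analysis"
begin

text \<open>Exponents live in the extended reals so that \<open>\<infinity>\<close> is allowed.
  \<open>inv_exp p\<close> is \<open>1/p\<close> with the convention \<open>1/\<infinity> = 0\<close>.\<close>
definition inv_exp :: "ereal \<Rightarrow> real" where
  "inv_exp p = (if p = \<infinity> then 0 else 1 / real_of_ereal p)"

definition lp_norm :: "ereal \<Rightarrow> ('a::real_normed_vector)^'n \<Rightarrow> real" where
  "lp_norm p x = (if p = \<infinity> then Max (range (\<lambda>i. norm (x $ i)))
                  else (\<Sum>i\<in>UNIV. norm (x $ i) powr real_of_ereal p) powr (1 / real_of_ereal p))"

definition op_norm :: "ereal \<Rightarrow> ereal \<Rightarrow> ('a::real_normed_field)^'m^'n \<Rightarrow> real" where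
  "op_norm p q A = Sup {lp_norm q (A *v x) / lp_norm p x | x. x \<noteq> 0}"

definition E_inf1 :: "ereal \<Rightarrow> ereal \<Rightarrow> ('a::real_normed_field)^'m^'n \<Rightarrow> bool" where
  "E_inf1 p q A \<longleftrightarrow>
     (\<forall>r s. p < r \<and> r \<le> \<infinity> \<and> 1 \<le> s \<and> s < q \<longrightarrow>
        op_norm r s A = real CARD('m) powr (inv_exp p - inv_exp r)
                        * real CARD('n) powr (inv_exp s - inv_exp q) * op_norm p q A)"

text \<open>Conjugate transpose of a complex matrix (for real matrices we use \<open>transpose\<close>).\<close>
definition cadjoint :: "complex^'m^'n \<Rightarrow> complex^'n^'m" where
  "cadjoint A = (\<chi> i j. cnj (A $ j $ i))"

definition is_eigvec :: "('a::field)^'m^'m \<Rightarrow> 'a^'m \<Rightarrow> bool" where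
  "is_eigvec M v \<longleftrightarrow> v \<noteq> 0 \<and> (\<exists>c. M *v v = c *s v)"

end

theory Submission
  imports Defs
begin


lemma bern_strict:
  fixes y a :: real
  assumes y: "y \<ge> 0" and a: "a > 1" and ne: "y \<noteq> 1"
  shows "y powr a > 1 + a * (y - 1)"
proof -
  have der: "\<And>x. x > 0 \<Longrightarrow> DERIV (\<lambda>x. x powr a) x :> a * x powr (a - 1)"
    by (rule has_real_derivative_powr)
  consider "y = 0" | "0 < y" "y < 1" | "y > 1" using y ne by linarith
  then show ?thesis
  proof cases
    case 1 then show ?thesis using a by simp
  next
    case 2
    obtain z where z: "y < z" "z < 1" "1 powr a - y powr a = (1 - y) * (a * z powr (a - 1))"
      using MVT2[of y 1 "\<lambda>x. x powr a" "\<lambda>x. a * x powr (a - 1)"] der 2 by force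
    have "z powr (a - 1) < 1"
      using powr_less_mono2[of "a - 1" z 1] z a 2 by simp
    then have "(1 - y) * (a * z powr (a - 1)) < (1 - y) * a" using 2 a by simp
    then show ?thesis using z by (simp add: algebra_simps)
  next
    case 3
    obtain z where z: "1 < z" "z < y" "y powr a - 1 powr a = (y - 1) * (a * z powr (a - 1))"
      using MVT2[of 1 y "\<lambda>x. x powr a" "\<lambda>x. a * x powr (a - 1)"] der 3 by force
    have "z powr (a - 1) > 1"
      using gr_one_powr[of z "a - 1"] z a by simp
    then have "(y - 1) * (a * z powr (a - 1)) > (y - 1) * a" using 3 a by simp
    then show ?thesis using z by (simp add: algebra_simps)
  qed
qed

lemma bern:
  fixes y a :: real
  assumes y: "y \<ge> 0" and a: "a \<ge> 1"
  shows "y powr a \<ge> 1 + a * (y - 1)"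
proof (cases "a = 1 \<or> y = 1")
  case True then show ?thesis using y by (auto simp: powr_one)
next
  case False then show ?thesis using bern_strict[of y a] y a by simp
qed

lemma tangent:
  fixes x mu a :: real
  assumes "x \<ge> 0" "mu > 0" "a \<ge> 1"
  shows "x powr a \<ge> mu powr a + a * mu powr (a - 1) * (x - mu)"
proof -
  have "(x / mu) powr a \<ge> 1 + a * (x / mu - 1)" using bern[of "x/mu" a] assms by simp
  then have "mu powr a * (x / mu) powr a \<ge> mu powr a * (1 + a * (x / mu - 1))"
    using assms by (intro mult_left_mono) auto
  moreover have "mu powr a * (x / mu) powr a = x powr a"
    using assms by (simp add: powr_divide)
  moreover have "mu powr a * (1 + a * (x / mu - 1)) = mu powr a + a * mu powr (a - 1) * (x - mu)"
    using assms by (simp add: powr_diff field_simps)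
  ultimately show ?thesis by simp
qed

lemma tangent_strict:
  fixes x mu a :: real
  assumes "x \<ge> 0" "mu > 0" "a > 1" "x \<noteq> mu"
  shows "x powr a > mu powr a + a * mu powr (a - 1) * (x - mu)"
proof -
  have "(x / mu) powr a > 1 + a * (x / mu - 1)" using bern_strict[of "x/mu" a] assms by simp
  then have "mu powr a * (x / mu) powr a > mu powr a * (1 + a * (x / mu - 1))"
    using assms by (intro mult_strict_left_mono) auto
  moreover have "mu powr a * (x / mu) powr a = x powr a"
    using assms by (simp add: powr_divide)
  moreover have "mu powr a * (1 + a * (x / mu - 1)) = mu powr a + a * mu powr (a - 1) * (x - mu)"
    using assms by (simp add: powr_diff field_simps)
  ultimately show ?thesis by simp
qed

lemma mean_powr:
  fixes z :: "'i \<Rightarrow> real"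
  assumes fin: "finite I" and ne: "I \<noteq> {}" and nn: "\<And>i. i \<in> I \<Longrightarrow> z i \<ge> 0" and a: "a \<ge> 1"
  shows "real (card I) * (sum z I / real (card I)) powr a \<le> (\<Sum>i\<in>I. z i powr a)"
proof -
  define mu where "mu = sum z I / real (card I)"
  have cpos: "real (card I) > 0" using fin ne by (simp add: card_gt_0_iff)
  show ?thesis
  proof (cases "mu = 0")
    case True then show ?thesis unfolding mu_def using nn by (auto intro!: sum_nonneg)
  next
    case False
    then have mu: "mu > 0" unfolding mu_def using nn cpos by (simp add: sum_nonneg order_le_neq_trans)
    have "(\<Sum>i\<in>I. mu powr a + a * mu powr (a - 1) * (z i - mu)) \<le> (\<Sum>i\<in>I. z i powr a)"
      by (rule sum_mono, rule tangent) (use nn mu a in auto)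
    moreover have "(\<Sum>i\<in>I. mu powr a + a * mu powr (a - 1) * (z i - mu))
        = real (card I) * mu powr a + a * mu powr (a - 1) * (sum z I - real (card I) * mu)"
      by (simp add: sum.distrib sum_subtractf flip: sum_distrib_left)
    moreover have "sum z I - real (card I) * mu = 0" unfolding mu_def using cpos by simp
    ultimately show ?thesis unfolding mu_def by simp
  qed
qed

lemma mean_powr_eq:
  fixes z :: "'i \<Rightarrow> real"
  assumes fin: "finite I" and ne: "I \<noteq> {}" and nn: "\<And>i. i \<in> I \<Longrightarrow> z i \<ge> 0" and a: "a > 1"
    and eq: "real (card I) * (sum z I / real (card I)) powr a = (\<Sum>i\<in>I. z i powr a)"
  shows "\<forall>i\<in>I. z i = sum z I / real (card I)"
proof -
  define mu where "mu = sum z I / real (card I)"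
  have cpos: "real (card I) > 0" using fin ne by (simp add: card_gt_0_iff)
  show ?thesis
  proof (cases "mu = 0")
    case True
    then have "sum z I = 0" unfolding mu_def using cpos by simp
    then have "\<forall>i\<in>I. z i = 0" using sum_nonneg_eq_0_iff[OF fin] nn by blast
    then show ?thesis using True unfolding mu_def by simp
  next
    case False
    then have mu: "mu > 0" unfolding mu_def using nn cpos by (simp add: sum_nonneg order_le_neq_trans)
    show ?thesis
    proof (rule ccontr)
      assume "\<not> ?thesis"
      then obtain k where k: "k \<in> I" "z k \<noteq> mu" unfolding mu_def by blast
      have "(\<Sum>i\<in>I. mu powr a + a * mu powr (a - 1) * (z i - mu)) < (\<Sum>i\<in>I. z i powr a)"
        apply (rule sum_strict_mono_ex1[OF fin])
        using tangent[of _ mu a] tangent_strict[of "z k" mu a] nn mu a k by auto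
      moreover have "(\<Sum>i\<in>I. mu powr a + a * mu powr (a - 1) * (z i - mu))
          = real (card I) * mu powr a + a * mu powr (a - 1) * (sum z I - real (card I) * mu)"
        by (simp add: sum.distrib sum_subtractf flip: sum_distrib_left)
      moreover have "sum z I - real (card I) * mu = 0" unfolding mu_def using cpos by simp
      ultimately show False using eq unfolding mu_def by simp
    qed
  qed
qed



lemma ereal_ge1_cases:
  fixes p :: ereal
  assumes "1 \<le> p"
  obtains "p = \<infinity>" | r where "p = ereal r" "r \<ge> 1"
  using assms by (cases p) auto

lemma lp_norm_fin: "lp_norm (ereal r) x = (\<Sum>i\<in>UNIV. norm (x $ i) powr r) powr (1 / r)"
  by (simp add: lp_norm_def)

lemma lp_norm_inf: "lp_norm \<infinity> x = Max (range (\<lambda>i. norm (x $ i)))"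
  by (simp add: lp_norm_def)

lemma inv_exp_fin [simp]: "inv_exp (ereal r) = 1 / r"
  by (simp add: inv_exp_def)

lemma inv_exp_inf [simp]: "inv_exp \<infinity> = 0"
  by (simp add: inv_exp_def)

lemma norm_le_lp_inf: "norm (x $ i) \<le> lp_norm \<infinity> (x :: ('a::real_normed_vector)^'n)"
  unfolding lp_norm_inf by (rule Max_ge) auto

lemma lp_inf_attained: "\<exists>i. lp_norm \<infinity> (x :: ('a::real_normed_vector)^'n) = norm (x $ i)"
proof -
  have "Max (range (\<lambda>i. norm (x $ i))) \<in> range (\<lambda>i. norm (x $ i))"
    by (rule Max_in) auto
  then obtain i where "Max (range (\<lambda>i. norm (x $ i))) = norm (x $ i)" by blast
  then show ?thesis unfolding lp_norm_inf by blast
qed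

lemma lp_inf_le_fin:
  fixes x :: "('a::real_normed_vector)^'n"
  assumes r: "r > 0"
  shows "lp_norm \<infinity> x \<le> lp_norm (ereal r) x"
proof -
  obtain i where i: "lp_norm \<infinity> x = norm (x $ i)" using lp_inf_attained by blast
  have "norm (x $ i) = (norm (x $ i) powr r) powr (1 / r)"
    using r by (simp add: powr_powr)
  also have "\<dots> \<le> (\<Sum>j\<in>UNIV. norm (x $ j) powr r) powr (1 / r)"
    apply (rule powr_mono2)
    using r apply simp
     apply simp
    by (rule member_le_sum) auto
  finally show ?thesis using i by (simp add: lp_norm_fin)
qed

lemma lp_inf_le:
  fixes x :: "('a::real_normed_vector)^'n"
  assumes "1 \<le> p"
  shows "lp_norm \<infinity> x \<le> lp_norm p x"
  using assms by (cases rule: ereal_ge1_cases) (auto intro: lp_inf_le_fin)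

lemma lp_norm_nonneg:
  fixes x :: "('a::real_normed_vector)^'n"
  assumes "1 \<le> p"
  shows "0 \<le> lp_norm p x"
  using lp_inf_le[OF assms, of x] norm_le_lp_inf[of x undefined] by (meson norm_ge_zero order_trans)

lemma lp_norm_pos:
  fixes x :: "('a::real_normed_vector)^'n"
  assumes "1 \<le> p" "x \<noteq> 0"
  shows "0 < lp_norm p x"
proof -
  obtain i where "x $ i \<noteq> 0" using assms(2) by (auto simp: vec_eq_iff)
  then have "0 < norm (x $ i)" by simp
  also have "\<dots> \<le> lp_norm \<infinity> x" by (rule norm_le_lp_inf)
  also have "\<dots> \<le> lp_norm p x" by (rule lp_inf_le[OF assms(1)])
  finally show ?thesis .
qed

lemma lp_norm_zero [simp]:
  assumes "1 \<le> p"
  shows "lp_norm p (0 :: ('a::real_normed_vector)^'n) = 0"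
  using assms by (cases rule: ereal_ge1_cases) (auto simp: lp_norm_def)

lemma lp_norm_1: "lp_norm 1 x = (\<Sum>i\<in>UNIV. norm (x $ i))"
proof -
  have "lp_norm 1 x = lp_norm (ereal 1) x" by (simp add: one_ereal_def)
  also have "\<dots> = (\<Sum>i\<in>UNIV. norm (x $ i))"
    unfolding lp_norm_fin by (simp add: powr_one sum_nonneg)
  finally show ?thesis .
qed

lemma lp_norm_2: "lp_norm 2 (x :: ('a::real_normed_vector)^'n) = norm x"
proof -
  have "lp_norm 2 x = lp_norm (ereal 2) x" by simp
  also have "\<dots> = sqrt (\<Sum>i\<in>UNIV. (norm (x $ i))\<^sup>2)"
    unfolding lp_norm_fin by (simp add: powr_half_sqrt sum_nonneg)
  also have "\<dots> = norm x" by (simp add: norm_vec_def L2_set_def)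
  finally show ?thesis .
qed

lemma lp_norm_const:
  fixes x :: "('a::real_normed_vector)^'n"
  assumes "1 \<le> p" "c \<ge> 0" "\<And>i. norm (x $ i) = c"
  shows "lp_norm p x = real CARD('n) powr inv_exp p * c"
  using assms(1)
proof (cases rule: ereal_ge1_cases)
  case 1
  have "range (\<lambda>i. norm (x $ i)) = {c}" using assms by auto
  then show ?thesis using 1 by (simp add: lp_norm_inf)
next
  case (2 r)
  have "lp_norm p x = (real CARD('n) * c powr r) powr (1 / r)"
    using 2 assms by (simp add: lp_norm_fin)
  also have "\<dots> = real CARD('n) powr (1 / r) * c"
    using 2 assms by (simp add: powr_mult powr_powr)
  finally show ?thesis using 2 by simp
qed


lemma power_mean_lp:
  fixes x :: "('a::real_normed_vector)^'n"
  assumes s: "1 \<le> s" and sq: "s \<le> q"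
  shows "lp_norm s x \<le> real CARD('n) powr (inv_exp s - inv_exp q) * lp_norm q x"
proof -
  define n where "n = real CARD('n)"
  have n: "n > 0" unfolding n_def by simp
  have q: "1 \<le> q" using s sq by simp
  show ?thesis using s
  proof (cases rule: ereal_ge1_cases)
    case 1
    then have "q = \<infinity>" using sq by simp
    then show ?thesis using 1 by simp
  next
    case (2 s')
    note s' = 2
    show ?thesis using q
    proof (cases rule: ereal_ge1_cases)
      case 1
      define M where "M = lp_norm \<infinity> x"
      have "(\<Sum>i\<in>UNIV. norm (x $ i) powr s') \<le> (\<Sum>i\<in>(UNIV::'n set). M powr s')"
        apply (rule sum_mono, rule powr_mono2)
        using s' by (auto simp: M_def norm_le_lp_inf)
      also have "\<dots> = n * M powr s'" by (simp add: n_def)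
      finally have "(\<Sum>i\<in>UNIV. norm (x $ i) powr s') powr (1/s') \<le> (n * M powr s') powr (1/s')"
        using s' by (intro powr_mono2) (auto intro!: sum_nonneg)
      also have "\<dots> = n powr (1/s') * M"
        using s' n by (simp add: powr_mult powr_powr M_def lp_norm_nonneg)
      finally show ?thesis using s' 1 by (simp add: lp_norm_fin n_def M_def)
    next
      case (2 q')
      note q' = 2
      have sq': "s' \<le> q'" using sq s' q' by simp
      define z where "z i = norm (x $ i) powr s'" for i
      define a where "a = q' / s'"
      have a: "a \<ge> 1" unfolding a_def using sq' s' by simp
      have zq: "z i powr a = norm (x $ i) powr q'" for i
        unfolding z_def a_def using s' by (simp add: powr_powr)
      have "n * (sum z UNIV / n) powr a \<le> (\<Sum>i\<in>UNIV. z i powr a)"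
        using mean_powr[of "UNIV :: 'n set" z a] a by (simp add: n_def z_def)
      then have "(sum z UNIV / n) powr a \<le> (\<Sum>i\<in>UNIV. norm (x $ i) powr q') / n"
        using n by (simp add: zq pos_le_divide_eq mult.commute)
      then have "((sum z UNIV / n) powr a) powr (1/q') \<le> ((\<Sum>i\<in>UNIV. norm (x $ i) powr q') / n) powr (1/q')"
        using q' by (intro powr_mono2) auto
      then have "(sum z UNIV / n) powr (1/s') \<le> ((\<Sum>i\<in>UNIV. norm (x $ i) powr q') / n) powr (1/q')"
        using q' s' by (simp add: powr_powr a_def)
      then have "(sum z UNIV) powr (1/s') / n powr (1/s') \<le> (\<Sum>i\<in>UNIV. norm (x $ i) powr q') powr (1/q') / n powr (1/q')"
        by (simp add: powr_divide)
      moreover have "n powr (1/s') > 0" "n powr (1/q') > 0" using n by auto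
      ultimately have "(sum z UNIV) powr (1/s') \<le> n powr (1/s') * ((\<Sum>i\<in>UNIV. norm (x $ i) powr q') powr (1/q') / n powr (1/q'))"
        by (simp add: pos_divide_le_eq mult.commute)
      then have "(sum z UNIV) powr (1/s') \<le> n powr (1/s') / n powr (1/q') * (\<Sum>i\<in>UNIV. norm (x $ i) powr q') powr (1/q')"
        by (simp add: divide_inverse mult_ac)
      then show ?thesis using s' q' by (simp add: lp_norm_fin z_def n_def powr_diff)
    qed
  qed
qed


lemma power_mean_eq_1:
  fixes x :: "('a::real_normed_vector)^'n"
  assumes q: "1 < q"
    and eq: "lp_norm 1 x = real CARD('n) powr (1 - inv_exp q) * lp_norm q x"
  shows "\<And>i. norm (x $ i) = lp_norm 1 x / real CARD('n)"
proof -
  define n where "n = real CARD('n)"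
  have n: "n > 0" unfolding n_def by simp
  have q1: "1 \<le> q" using q by simp
  from q1 show "\<And>i. norm (x $ i) = lp_norm 1 x / real CARD('n)"
  proof (cases rule: ereal_ge1_cases)
    case 1
    define M where "M = lp_norm \<infinity> x"
    have le: "norm (x $ i) \<le> M" for i unfolding M_def by (rule norm_le_lp_inf)
    have "(\<Sum>i\<in>UNIV. norm (x $ i)) = n * M" using eq 1 by (simp add: lp_norm_1 n_def M_def)
    then have "(\<Sum>i\<in>UNIV. M - norm (x $ i)) = 0" by (simp add: sum_subtractf n_def)
    then have "\<forall>i\<in>UNIV. M - norm (x $ i) = 0"
      by (subst sum_nonneg_eq_0_iff[symmetric]) (auto simp: le)
    then have "norm (x $ i) = M" for i by simp
    moreover have "lp_norm 1 x = n * M" using eq 1 by (simp add: n_def M_def)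
    ultimately show "norm (x $ i) = lp_norm 1 x / real CARD('n)" for i using n by (simp add: n_def)
  next
    case (2 q')
    define z where "z = (\<lambda>i. norm (x $ i))"
    have "sum z UNIV = n powr (1 - 1/q') * (\<Sum>i\<in>UNIV. z i powr q') powr (1/q')"
      using eq 2 unfolding z_def by (simp add: lp_norm_1 lp_norm_fin n_def)
    then have "sum z UNIV / n = (\<Sum>i\<in>UNIV. z i powr q') powr (1/q') / n powr (1/q')"
    proof -
      have N: "n powr (1/q') > 0" using n by simp
      assume h: "sum z UNIV = n powr (1 - 1/q') * (\<Sum>i\<in>UNIV. z i powr q') powr (1/q')"
      have "n powr (1 - 1/q') = n / n powr (1/q')" using n by (simp add: powr_diff)
      then have "sum z UNIV = n * ((\<Sum>i\<in>UNIV. z i powr q') powr (1/q') / n powr (1/q'))"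
        using h by (simp add: divide_inverse mult_ac)
      then show ?thesis using n by (simp add: nonzero_eq_divide_eq mult.commute)
    qed
    then have "(sum z UNIV / n) powr q' = ((\<Sum>i\<in>UNIV. z i powr q') powr (1/q') / n powr (1/q')) powr q'"
      by simp
    also have "\<dots> = (\<Sum>i\<in>UNIV. z i powr q') / n"
      using 2 n by (simp add: powr_divide powr_powr sum_nonneg)
    finally have "n * (sum z UNIV / n) powr q' = (\<Sum>i\<in>UNIV. z i powr q')" using n by simp
    then have eqf: "real (card (UNIV::'n set)) * (sum z UNIV / real (card (UNIV::'n set))) powr q' = (\<Sum>i\<in>UNIV. z i powr q')"
      unfolding n_def by simp
    have nn: "\<And>i. i \<in> UNIV \<Longrightarrow> z i \<ge> 0" unfolding z_def by simp
    have q'1: "q' > 1" using q 2 by simp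
    have "\<forall>i\<in>UNIV. z i = sum z UNIV / real (card (UNIV::'n set))"
      by (rule mean_powr_eq[OF _ UNIV_not_empty nn q'1 eqf]) simp
    then show "norm (x $ i) = lp_norm 1 x / real CARD('n)" for i
      unfolding z_def lp_norm_1 by blast
  qed
qed



lemma mv_nth: "(A *v x) $ i = (\<Sum>j\<in>UNIV. A $ i $ j * x $ j)"
  by (simp add: matrix_vector_mult_def)

lemma norm_mv_le:
  fixes A :: "('a::real_normed_field)^'m^'n"
  shows "norm ((A *v x) $ i) \<le> (\<Sum>j\<in>UNIV. norm (A $ i $ j)) * lp_norm \<infinity> x"
proof -
  have "norm ((A *v x) $ i) \<le> (\<Sum>j\<in>UNIV. norm (A $ i $ j * x $ j))"
    unfolding mv_nth by (rule norm_sum)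
  also have "\<dots> \<le> (\<Sum>j\<in>UNIV. norm (A $ i $ j) * lp_norm \<infinity> x)"
    by (rule sum_mono) (simp add: norm_mult mult_left_mono norm_le_lp_inf)
  finally show ?thesis by (simp add: sum_distrib_right)
qed

lemma lp_inf_mv:
  fixes A :: "('a::real_normed_field)^'m^'n"
  shows "lp_norm \<infinity> (A *v x) \<le> (\<Sum>i\<in>UNIV. \<Sum>j\<in>UNIV. norm (A $ i $ j)) * lp_norm \<infinity> x"
proof -
  obtain i where i: "lp_norm \<infinity> (A *v x) = norm ((A *v x) $ i)" using lp_inf_attained by blast
  have "(\<Sum>j\<in>UNIV. norm (A $ i $ j)) \<le> (\<Sum>i\<in>UNIV. \<Sum>j\<in>UNIV. norm (A $ i $ j))"
    by (rule member_le_sum) (auto intro: sum_nonneg)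
  then have "(\<Sum>j\<in>UNIV. norm (A $ i $ j)) * lp_norm \<infinity> x \<le> (\<Sum>i\<in>UNIV. \<Sum>j\<in>UNIV. norm (A $ i $ j)) * lp_norm \<infinity> x"
    by (rule mult_right_mono) (simp add: lp_norm_nonneg)
  then show ?thesis using i norm_mv_le[of A x i] by linarith
qed

lemma op_crude:
  fixes A :: "('a::real_normed_field)^'m^'n"
  assumes p: "1 \<le> p" and q: "1 \<le> q"
  shows "lp_norm q (A *v x) \<le> (real CARD('n) powr inv_exp q * (\<Sum>i\<in>UNIV. \<Sum>j\<in>UNIV. norm (A $ i $ j))) * lp_norm p x"
proof -
  have "lp_norm q (A *v x) \<le> real CARD('n) powr (inv_exp q - inv_exp \<infinity>) * lp_norm \<infinity> (A *v x)"
    by (rule power_mean_lp[OF q]) simp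
  also have "\<dots> \<le> real CARD('n) powr inv_exp q * ((\<Sum>i\<in>UNIV. \<Sum>j\<in>UNIV. norm (A $ i $ j)) * lp_norm \<infinity> x)"
    by (simp add: mult_left_mono lp_inf_mv)
  also have "\<dots> \<le> real CARD('n) powr inv_exp q * ((\<Sum>i\<in>UNIV. \<Sum>j\<in>UNIV. norm (A $ i $ j)) * lp_norm p x)"
    by (intro mult_left_mono lp_inf_le p) (auto intro!: sum_nonneg)
  finally show ?thesis by (simp add: mult_ac)
qed

lemma op_bdd:
  fixes A :: "('a::real_normed_field)^'m^'n"
  assumes p: "1 \<le> p" and q: "1 \<le> q"
  shows "bdd_above {lp_norm q (A *v x) / lp_norm p x | x. x \<noteq> 0}"
proof -
  define C where "C = real CARD('n) powr inv_exp q * (\<Sum>i\<in>UNIV. \<Sum>j\<in>UNIV. norm (A $ i $ j))"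
  have "lp_norm q (A *v x) / lp_norm p x \<le> C" if "x \<noteq> 0" for x
    using op_crude[OF p q, of A x] lp_norm_pos[OF p that] unfolding C_def
    by (simp add: pos_divide_le_eq)
  then show ?thesis by (intro bdd_aboveI[of _ C]) blast
qed

lemma op_ne: "{lp_norm q (A *v x) / lp_norm p x | x :: ('a::real_normed_field)^'m. x \<noteq> 0} \<noteq> {}"
proof -
  have "(vec 1 :: 'a^'m) \<noteq> 0" by (simp add: vec_eq_iff)
  then show ?thesis by blast
qed

lemma op_ratio_le:
  fixes A :: "('a::real_normed_field)^'m^'n"
  assumes p: "1 \<le> p" and q: "1 \<le> q" and x: "x \<noteq> 0"
  shows "lp_norm q (A *v x) / lp_norm p x \<le> op_norm p q A"
  unfolding op_norm_def by (rule cSup_upper) (use op_bdd[OF p q, of A] x in auto)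

lemma op_bound:
  fixes A :: "('a::real_normed_field)^'m^'n"
  assumes p: "1 \<le> p" and q: "1 \<le> q"
  shows "lp_norm q (A *v x) \<le> op_norm p q A * lp_norm p x"
proof (cases "x = 0")
  case True then show ?thesis using p q by simp
next
  case False
  then show ?thesis using op_ratio_le[OF p q False, of A] lp_norm_pos[OF p False]
    by (simp add: pos_divide_le_eq)
qed

lemma op_least:
  fixes A :: "('a::real_normed_field)^'m^'n"
  assumes p: "1 \<le> p" and le: "\<And>x. x \<noteq> 0 \<Longrightarrow> lp_norm q (A *v x) \<le> C * lp_norm p x"
  shows "op_norm p q A \<le> C"
  unfolding op_norm_def
proof (rule cSup_least[OF op_ne])
  fix y assume "y \<in> {lp_norm q (A *v x) / lp_norm p x | x. x \<noteq> 0}"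
  then obtain x where x: "x \<noteq> 0" "y = lp_norm q (A *v x) / lp_norm p x" by blast
  then show "y \<le> C" using le[OF x(1)] lp_norm_pos[OF p x(1)] by (simp add: pos_divide_le_eq)
qed

lemma op_nonneg:
  fixes A :: "('a::real_normed_field)^'m^'n"
  assumes p: "1 \<le> p" and q: "1 \<le> q"
  shows "0 \<le> op_norm p q A"
proof -
  have x: "(vec 1 :: 'a^'m) \<noteq> 0" by (simp add: vec_eq_iff)
  show ?thesis using op_ratio_le[OF p q x, of A] lp_norm_nonneg[OF q, of "A *v vec 1"]
    lp_norm_pos[OF p x] by (smt (verit) divide_nonneg_pos)
qed



lemma mv_scaleR:
  fixes A :: "('a::real_normed_field)^'m^'n"
  shows "A *v (t *\<^sub>R x) = t *\<^sub>R (A *v x)"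
  by (simp add: vec_eq_iff mv_nth scaleR_right.sum)

lemma sq_powr:
  assumes "0 \<le> (y::real)" shows "(y\<^sup>2) powr (a / 2) = y powr a"
proof -
  have "y\<^sup>2 = y powr 2" using assms by simp
  then have "(y\<^sup>2) powr (a / 2) = (y powr 2) powr (a / 2)" by simp
  also have "\<dots> = y powr (2 * (a / 2))" by (simp only: powr_powr)
  finally show ?thesis by simp
qed

lemma inner_expand:
  fixes a b :: "'a::real_inner"
  shows "inner (a + t *\<^sub>R b) (a + t *\<^sub>R b) = inner a a + 2 * t * inner a b + t\<^sup>2 * inner b b"
  by (simp add: inner_add_left inner_add_right inner_commute power2_eq_square algebra_simps)

lemma lp_norm_powr_inner:
  fixes x :: "('a::real_inner)^'n"
  assumes r: "r > 0"
  shows "lp_norm (ereal r) x powr s = (\<Sum>j\<in>UNIV. inner (x $ j) (x $ j) powr (r / 2)) powr (s / r)"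
proof -
  have eqj: "norm (x $ j) powr r = inner (x $ j) (x $ j) powr (r / 2)" for j
    using sq_powr[of "norm (x $ j)" r] by (metis norm_ge_zero power2_norm_eq_inner)
  have "lp_norm (ereal r) x powr s = (\<Sum>j\<in>UNIV. norm (x $ j) powr r) powr (1 / r * s)"
    by (simp only: lp_norm_fin powr_powr)
  also have "\<dots> = (\<Sum>j\<in>UNIV. inner (x $ j) (x $ j) powr (r / 2)) powr (s / r)"
    by (simp only: eqj) simp
  finally show ?thesis .
qed

lemma stationary:
  fixes A :: "('a::{real_normed_field,real_inner})^'m^'n"
  assumes r: "r > 1" and s: "s > 1"
    and v: "\<And>j. norm (v $ j) = 1"
    and tau: "\<And>i. norm ((A *v v) $ i) = \<tau>" "\<tau> > 0"
    and L: "L \<ge> 0"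
    and bound: "\<And>x. lp_norm (ereal s) (A *v x) \<le> L * lp_norm (ereal r) x"
    and attain: "lp_norm (ereal s) (A *v v) \<ge> L * lp_norm (ereal r) v"
  shows "\<exists>c. \<forall>w. inner (A *v v) (A *v w) = c * inner v w"
proof -
  define m where "m = real CARD('m)"
  have m: "m > 0" unfolding m_def by simp
  define \<alpha> where "\<alpha> = L powr s * ((s / r) * m powr (s / r - 1) * r)"
  define \<beta> where "\<beta> = s * (\<tau>\<^sup>2) powr (s / 2 - 1)"
  have \<beta>: "\<beta> > 0" unfolding \<beta>_def using s tau by simp
  have "inner (A *v v) (A *v w) = (\<alpha> / \<beta>) * inner v w" for w
  proof -
    define a where "a = A *v v"
    define b where "b = A *v w"
    define Q where "Q j t = inner (v $ j) (v $ j) + 2 * t * inner (v $ j) (w $ j) + t\<^sup>2 * inner (w $ j) (w $ j)" for j t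
    define R where "R i t = inner (a $ i) (a $ i) + 2 * t * inner (a $ i) (b $ i) + t\<^sup>2 * inner (b $ i) (b $ i)" for i t
    define h where "h t = L powr s * (\<Sum>j\<in>UNIV. Q j t powr (r / 2)) powr (s / r) - (\<Sum>i\<in>UNIV. R i t powr (s / 2))" for t
    have Xeq: "lp_norm (ereal s) (A *v (v + t *\<^sub>R w)) powr s = (\<Sum>i\<in>UNIV. R i t powr (s / 2))" for t
    proof -
      have "lp_norm (ereal s) (A *v (v + t *\<^sub>R w)) powr s
          = (\<Sum>i\<in>UNIV. inner ((A *v (v + t *\<^sub>R w)) $ i) ((A *v (v + t *\<^sub>R w)) $ i) powr (s / 2)) powr (s / s)"
        by (rule lp_norm_powr_inner) (use s in simp)
      also have "\<dots> = (\<Sum>i\<in>UNIV. R i t powr (s / 2))"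
        using s by (simp add: R_def a_def b_def matrix_vector_right_distrib mv_scaleR inner_expand sum_nonneg)
      finally show ?thesis .
    qed
    have Yeq: "lp_norm (ereal r) (v + t *\<^sub>R w) powr s = (\<Sum>j\<in>UNIV. Q j t powr (r / 2)) powr (s / r)" for t
    proof -
      have "lp_norm (ereal r) (v + t *\<^sub>R w) powr s
          = (\<Sum>j\<in>UNIV. inner ((v + t *\<^sub>R w) $ j) ((v + t *\<^sub>R w) $ j) powr (r / 2)) powr (s / r)"
        by (rule lp_norm_powr_inner) (use r in simp)
      also have "\<dots> = (\<Sum>j\<in>UNIV. Q j t powr (r / 2)) powr (s / r)"
        by (simp add: Q_def inner_expand)
      finally show ?thesis .
    qed
    have hge: "h t \<ge> 0" for t
    proof -
      have n1: "0 \<le> lp_norm (ereal s) (A *v (v + t *\<^sub>R w))" by (rule lp_norm_nonneg) (use s in simp)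
      have n2: "0 \<le> lp_norm (ereal r) (v + t *\<^sub>R w)" by (rule lp_norm_nonneg) (use r in simp)
      have "lp_norm (ereal s) (A *v (v + t *\<^sub>R w)) powr s \<le> (L * lp_norm (ereal r) (v + t *\<^sub>R w)) powr s"
        using bound n1 s by (intro powr_mono2) auto
      also have "\<dots> = L powr s * lp_norm (ereal r) (v + t *\<^sub>R w) powr s"
        using L n2 by (simp add: powr_mult)
      finally show ?thesis unfolding h_def Xeq Yeq by simp
    qed
    have h0: "h 0 \<le> 0"
    proof -
      have n2: "0 \<le> lp_norm (ereal r) v" by (rule lp_norm_nonneg) (use r in simp)
      have "L powr s * lp_norm (ereal r) v powr s = (L * lp_norm (ereal r) v) powr s"
        using L n2 by (simp add: powr_mult)
      also have "\<dots> \<le> lp_norm (ereal s) (A *v v) powr s"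
        using attain L n2 s by (intro powr_mono2) auto
      finally show ?thesis using Xeq[of 0] Yeq[of 0] unfolding h_def by simp
    qed
    have Q0: "Q j 0 = 1" for j using v[of j] by (simp add: Q_def flip: power2_norm_eq_inner)
    have R0: "R i 0 = \<tau>\<^sup>2" for i using tau(1)[of i] by (simp add: R_def a_def flip: power2_norm_eq_inner)
    have dQ: "DERIV (\<lambda>t. Q j t powr (r / 2)) 0 :> (r / 2) * (2 * inner (v $ j) (w $ j))" for j
    proof -
      have "DERIV (Q j) 0 :> 2 * inner (v $ j) (w $ j)"
        unfolding Q_def by (auto intro!: derivative_eq_intros)
      from DERIV_fun_powr[OF this, of "r / 2"] show ?thesis by (simp add: Q0)
    qed
    have dR: "DERIV (\<lambda>t. R i t powr (s / 2)) 0 :> (s / 2) * (\<tau>\<^sup>2) powr (s / 2 - 1) * (2 * inner (a $ i) (b $ i))" for i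
    proof -
      have "DERIV (R i) 0 :> 2 * inner (a $ i) (b $ i)"
        unfolding R_def by (auto intro!: derivative_eq_intros)
      from DERIV_fun_powr[OF this, of "s / 2"] show ?thesis using tau by (simp add: R0)
    qed
    have sQ0: "(\<Sum>j\<in>UNIV. Q j 0 powr (r / 2)) = m" by (simp add: Q0 m_def)
    have dsQ: "DERIV (\<lambda>t. \<Sum>j\<in>UNIV. Q j t powr (r / 2)) 0 :> (\<Sum>j\<in>UNIV. (r / 2) * (2 * inner (v $ j) (w $ j)))"
      by (rule DERIV_sum) (rule dQ)
    have dY: "DERIV (\<lambda>t. (\<Sum>j\<in>UNIV. Q j t powr (r / 2)) powr (s / r)) 0 :> (s / r) * m powr (s / r - 1) * (\<Sum>j\<in>UNIV. (r / 2) * (2 * inner (v $ j) (w $ j)))"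
      using DERIV_fun_powr[OF dsQ, of "s / r"] m by (simp add: sQ0)
    have dX: "DERIV (\<lambda>t. \<Sum>i\<in>UNIV. R i t powr (s / 2)) 0 :> (\<Sum>i\<in>UNIV. (s / 2) * (\<tau>\<^sup>2) powr (s / 2 - 1) * (2 * inner (a $ i) (b $ i)))"
      by (rule DERIV_sum) (rule dR)
    have dh: "DERIV h 0 :> L powr s * ((s / r) * m powr (s / r - 1) * (\<Sum>j\<in>UNIV. (r / 2) * (2 * inner (v $ j) (w $ j))))
                 - (\<Sum>i\<in>UNIV. (s / 2) * (\<tau>\<^sup>2) powr (s / 2 - 1) * (2 * inner (a $ i) (b $ i)))"
      unfolding h_def by (intro DERIV_diff DERIV_cmult dY dX)
    have "L powr s * ((s / r) * m powr (s / r - 1) * (\<Sum>j\<in>UNIV. (r / 2) * (2 * inner (v $ j) (w $ j))))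
                 - (\<Sum>i\<in>UNIV. (s / 2) * (\<tau>\<^sup>2) powr (s / 2 - 1) * (2 * inner (a $ i) (b $ i))) = 0"
      by (rule DERIV_local_min[OF dh, of 1]) (use hge h0 in \<open>auto intro: order_trans\<close>)
    moreover have "(\<Sum>j\<in>UNIV. (r / 2) * (2 * inner (v $ j) (w $ j))) = r * inner v w"
      by (simp add: inner_vec_def sum_distrib_left)
    moreover have "(\<Sum>i\<in>UNIV. (s / 2) * (\<tau>\<^sup>2) powr (s / 2 - 1) * (2 * inner (a $ i) (b $ i))) = \<beta> * inner a b"
      unfolding inner_vec_def \<beta>_def sum_distrib_left by (intro sum.cong refl) simp
    ultimately have "\<alpha> * inner v w - \<beta> * inner a b = 0"
      unfolding \<alpha>_def using r by (simp add: mult_ac)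
    then show ?thesis using \<beta> unfolding a_def b_def by (simp add: field_simps)
  qed
  then show ?thesis by blast
qed



lemma quad0:
  fixes b c :: real
  assumes "\<And>t. 0 \<le> b * t + c * t\<^sup>2"
  shows "b = 0"
proof -
  have d: "DERIV (\<lambda>t. b * t + c * t\<^sup>2) 0 :> b"
    by (auto intro!: derivative_eq_intros)
  have "\<forall>y. \<bar>0 - y\<bar> < 1 \<longrightarrow> b * 0 + c * 0\<^sup>2 \<le> b * y + c * y\<^sup>2"
  proof (intro allI impI)
    fix y :: real
    show "b * 0 + c * 0\<^sup>2 \<le> b * y + c * y\<^sup>2" using assms[of y] by simp
  qed
  then show ?thesis by (rule DERIV_local_min[OF d, of 1, rotated]) simp
qed

lemma mv_cont:
  fixes A :: "('a::{euclidean_space,real_normed_field})^'m^'n"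
  shows "continuous_on S (\<lambda>x. A *v x)"
  by (rule linear_continuous_on) (simp add: linear_conv_bounded_linear[symmetric])

lemma rayleigh:
  fixes A :: "('a::{euclidean_space,real_normed_field})^'m^'n"
  shows "\<exists>x0. x0 \<noteq> 0 \<and> (\<forall>w. inner (A *v x0) (A *v w) = (op_norm 2 2 A)\<^sup>2 * inner x0 w)"
proof -
  define K where "K = op_norm 2 2 A"
  have one2: "(1::ereal) \<le> 2" by simp
  have bound: "norm (A *v x) \<le> K * norm x" for x
  proof -
    have "lp_norm 2 (A *v x) \<le> op_norm 2 2 A * lp_norm 2 x" by (rule op_bound) simp_all
    then show ?thesis by (simp only: lp_norm_2 K_def)
  qed
  have K0: "K \<ge> 0" unfolding K_def by (rule op_nonneg) simp_all
  have ne: "sphere (0 :: 'a^'m) 1 \<noteq> {}"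
  proof -
    have "(vec 1 :: 'a^'m) \<noteq> 0" by (simp add: vec_eq_iff)
    then have "(1 / norm (vec 1 :: 'a^'m)) *\<^sub>R (vec 1 :: 'a^'m) \<in> sphere 0 1" by simp
    then show ?thesis by blast
  qed
  obtain x0 where x0: "x0 \<in> sphere 0 1" and mx: "\<And>y. y \<in> sphere 0 1 \<Longrightarrow> norm (A *v y) \<le> norm (A *v x0)"
  proof -
    have "continuous_on (sphere 0 1) (\<lambda>x. norm (A *v x))" by (intro continuous_on_norm mv_cont)
    from continuous_attains_sup[OF compact_sphere ne this] show ?thesis using that by blast
  qed
  have nx0: "norm x0 = 1" using x0 by simp
  have "K \<le> norm (A *v x0)"
    unfolding K_def
  proof (rule op_least)
    fix x :: "'a^'m" assume x: "x \<noteq> 0"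
    have "(1 / norm x) *\<^sub>R x \<in> sphere 0 1" using x by simp
    then have "norm (A *v ((1 / norm x) *\<^sub>R x)) \<le> norm (A *v x0)" by (rule mx)
    then have "norm (A *v x) / norm x \<le> norm (A *v x0)" by (simp add: mv_scaleR)
    then have "norm (A *v x) \<le> norm (A *v x0) * norm x"
      using x by (simp add: divide_le_eq)
    then show "lp_norm 2 (A *v x) \<le> norm (A *v x0) * lp_norm 2 x"
      by (simp only: lp_norm_2)
  qed simp
  then have eqK: "norm (A *v x0) = K" using bound[of x0] nx0 by simp
  have "inner (A *v x0) (A *v w) = K\<^sup>2 * inner x0 w" for w
  proof -
    define b where "b = 2 * (K\<^sup>2 * inner x0 w - inner (A *v x0) (A *v w))"
    define c where "c = K\<^sup>2 * inner w w - inner (A *v w) (A *v w)"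
    have "0 \<le> b * t + c * t\<^sup>2" for t
    proof -
      have "(norm (A *v (x0 + t *\<^sub>R w)))\<^sup>2 \<le> (K * norm (x0 + t *\<^sub>R w))\<^sup>2"
        using bound[of "x0 + t *\<^sub>R w"] by (simp add: power_mono)
      then have "inner (A *v x0 + t *\<^sub>R (A *v w)) (A *v x0 + t *\<^sub>R (A *v w)) \<le> K\<^sup>2 * inner (x0 + t *\<^sub>R w) (x0 + t *\<^sub>R w)"
        by (simp add: power2_norm_eq_inner power_mult_distrib matrix_vector_right_distrib mv_scaleR)
      then have "inner (A *v x0) (A *v x0) + 2 * t * inner (A *v x0) (A *v w) + t\<^sup>2 * inner (A *v w) (A *v w)
          \<le> K\<^sup>2 * (inner x0 x0 + 2 * t * inner x0 w + t\<^sup>2 * inner w w)"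
        by (simp only: inner_expand)
      moreover have "inner (A *v x0) (A *v x0) = K\<^sup>2 * inner x0 x0"
        using eqK nx0 by (simp flip: power2_norm_eq_inner)
      ultimately show ?thesis unfolding b_def c_def by (simp add: algebra_simps)
    qed
    then have "b = 0" by (rule quad0)
    then show ?thesis unfolding b_def by simp
  qed
  moreover have "x0 \<noteq> 0" using nx0 by auto
  ultimately show ?thesis unfolding K_def by blast
qed



lemma op_upper:
  fixes A :: "('a::real_normed_field)^'m^'n"
  assumes p: "1 \<le> p" "p \<le> r" and s: "1 \<le> s" "s \<le> q"
  shows "op_norm r s A \<le> real CARD('m) powr (inv_exp p - inv_exp r) * real CARD('n) powr (inv_exp s - inv_exp q) * op_norm p q A"
proof (rule op_least)
  show r: "1 \<le> r" using p by simp
  have q: "1 \<le> q" using s by simp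
  fix x :: "'a^'m" assume "x \<noteq> 0"
  have "lp_norm s (A *v x) \<le> real CARD('n) powr (inv_exp s - inv_exp q) * lp_norm q (A *v x)"
    by (rule power_mean_lp[OF s])
  also have "\<dots> \<le> real CARD('n) powr (inv_exp s - inv_exp q) * (op_norm p q A * lp_norm p x)"
    by (intro mult_left_mono op_bound p q) simp
  also have "\<dots> \<le> real CARD('n) powr (inv_exp s - inv_exp q) * (op_norm p q A * (real CARD('m) powr (inv_exp p - inv_exp r) * lp_norm r x))"
    by (intro mult_left_mono power_mean_lp p op_nonneg q) simp_all
  finally show "lp_norm s (A *v x) \<le> real CARD('m) powr (inv_exp p - inv_exp r) * real CARD('n) powr (inv_exp s - inv_exp q) * op_norm p q A * lp_norm r x"
    by (simp add: mult_ac)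
qed

lemma backward:
  fixes A :: "('a::real_normed_field)^'m^'n"
  assumes p: "1 \<le> p" and q: "1 < q"
    and v: "\<And>j. norm (v $ j) = 1"
    and tau: "\<And>i. norm ((A *v v) $ i) = \<tau>"
    and tauval: "\<tau> = real CARD('m) powr (inv_exp p) * real CARD('n) powr (- inv_exp q) * op_norm p q A"
  shows "E_inf1 p q A"
  unfolding E_inf1_def
proof (intro allI impI)
  fix r s :: ereal
  assume rs: "p < r \<and> r \<le> \<infinity> \<and> 1 \<le> s \<and> s < q"
  have r1: "1 \<le> r" "p \<le> r" using rs p by auto
  have s1: "1 \<le> s" "s \<le> q" using rs by auto
  have q1: "1 \<le> q" using q by simp
  define m where "m = real CARD('m)"
  define n where "n = real CARD('n)"
  have m: "m > 0" and n: "n > 0" unfolding m_def n_def by simp_all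
  have t0: "\<tau> \<ge> 0" using tau[of undefined] by (metis norm_ge_zero)
  have vne: "v \<noteq> 0" using v[of undefined] by (metis norm_zero zero_index zero_neq_one)
  have "lp_norm s (A *v v) / lp_norm r v \<le> op_norm r s A"
    by (rule op_ratio_le[OF r1(1) s1(1) vne])
  moreover have "lp_norm s (A *v v) = n powr inv_exp s * \<tau>"
    unfolding n_def by (rule lp_norm_const[OF s1(1) t0 tau])
  moreover have "lp_norm r v = m powr inv_exp r"
    using lp_norm_const[OF r1(1), of 1 v] v unfolding m_def by simp
  moreover have "n powr inv_exp s * \<tau> / m powr inv_exp r
      = m powr (inv_exp p - inv_exp r) * n powr (inv_exp s - inv_exp q) * op_norm p q A"
    unfolding tauval m_def[symmetric] n_def[symmetric] using m n
    by (simp add: powr_diff powr_minus divide_inverse mult_ac)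
  ultimately have ge: "m powr (inv_exp p - inv_exp r) * n powr (inv_exp s - inv_exp q) * op_norm p q A \<le> op_norm r s A"
    by simp
  have le: "op_norm r s A \<le> m powr (inv_exp p - inv_exp r) * n powr (inv_exp s - inv_exp q) * op_norm p q A"
    unfolding m_def n_def by (rule op_upper[OF p r1(2) s1])
  show "op_norm r s A = real CARD('m) powr (inv_exp p - inv_exp r) * real CARD('n) powr (inv_exp s - inv_exp q) * op_norm p q A"
    using ge le unfolding m_def n_def by simp
qed



lemma inv_exp_1 [simp]: "inv_exp 1 = 1"
  by (simp add: inv_exp_def)

lemma mv_bl:
  fixes A :: "('a::{euclidean_space,real_normed_field})^'m^'n"
  shows "bounded_linear (\<lambda>x. A *v x)"
  by (simp add: linear_conv_bounded_linear[symmetric])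

lemma forward:
  fixes A :: "('a::{euclidean_space,real_normed_field})^'m^'n"
  assumes p: "1 \<le> p" "p < \<infinity>" and q: "1 < q" and E: "E_inf1 p q A"
  shows "\<exists>v. (\<forall>j. norm (v $ j) = 1) \<and>
             (\<forall>i. norm ((A *v v) $ i) = real CARD('m) powr (inv_exp p) * real CARD('n) powr (- inv_exp q) * op_norm p q A) \<and>
             (\<exists>c. \<forall>w. inner (A *v v) (A *v w) = c * inner v w)"
proof -
  obtain p' where p': "p = ereal p'" "p' \<ge> 1" using p by (cases p) auto
  define K where "K = op_norm p q A"
  define m where "m = real CARD('m)"
  define n where "n = real CARD('n)"
  have m: "m > 0" and n: "n > 0" unfolding m_def n_def by simp_all
  have q1: "1 \<le> q" using q by simp
  have K0: "K \<ge> 0" unfolding K_def by (rule op_nonneg[OF p(1) q1])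
  show ?thesis
  proof (cases "K = 0")
    case True
    have Az: "A *v x = 0" for x
    proof (rule ccontr)
      assume "A *v x \<noteq> 0"
      then have "0 < lp_norm q (A *v x)" by (rule lp_norm_pos[OF q1])
      moreover have "lp_norm q (A *v x) \<le> K * lp_norm p x" unfolding K_def by (rule op_bound[OF p(1) q1])
      ultimately show False using True by simp
    qed
    have "\<forall>j. norm ((vec 1 :: 'a^'m) $ j) = 1" by simp
    moreover have "\<forall>i. norm ((A *v vec 1) $ i) = m powr (inv_exp p) * n powr (- inv_exp q) * K"
      using Az True by simp
    moreover have "\<forall>w. inner (A *v vec 1) (A *v w) = 0 * inner (vec 1) w" using Az by simp
    ultimately show ?thesis unfolding K_def m_def n_def by blast
  next
    case False
    then have Kp: "K > 0" using K0 by simp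
    define B where "B = {x :: 'a^'m. \<forall>j. norm (x $ j) \<le> 1}"
    define g where "g x = (\<Sum>i\<in>UNIV. norm ((A *v x) $ i))" for x
    have bB: "bounded B"
    proof (rule boundedI)
      fix x assume "x \<in> B"
      then have "norm x \<le> (\<Sum>j\<in>UNIV. norm (x $ j))"
        by (simp add: norm_vec_def L2_set_le_sum)
      also have "\<dots> \<le> (\<Sum>j\<in>(UNIV::'m set). 1)" using \<open>x \<in> B\<close> unfolding B_def by (intro sum_mono) auto
      finally show "norm x \<le> m" by (simp add: m_def)
    qed
    have cB: "closed B" unfolding B_def
      by (intro closed_Collect_all closed_Collect_le continuous_on_norm continuous_on_const
          linear_continuous_on bounded_linear_vec_nth)
    have neB: "B \<noteq> {}"
    proof -
      have "(vec 1 :: 'a^'m) \<in> B" unfolding B_def by simp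
      then show ?thesis by blast
    qed
    have cg: "continuous_on B g" unfolding g_def
      by (intro continuous_on_sum continuous_on_norm linear_continuous_on
          bounded_linear_compose[OF bounded_linear_vec_nth mv_bl])
    obtain v where vB: "v \<in> B" and vmax: "\<And>y. y \<in> B \<Longrightarrow> g y \<le> g v"
      using continuous_attains_sup[OF iffD2[OF compact_eq_bounded_closed conjI[OF bB cB]] neB cg] by blast
    have inf1: "(1::ereal) \<le> \<infinity>" by simp
    have one1: "(1::ereal) \<le> 1" by simp
    have st2: "op_norm \<infinity> 1 A \<le> g v"
    proof (rule op_least[OF inf1])
      fix x :: "'a^'m" assume x: "x \<noteq> 0"
      define c where "c = lp_norm \<infinity> x"
      have c: "c > 0" unfolding c_def by (rule lp_norm_pos[OF inf1 x])
      have "(1 / c) *\<^sub>R x \<in> B" unfolding B_def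
        using c norm_le_lp_inf[of x] by (simp add: c_def divide_le_eq)
      then have "g ((1 / c) *\<^sub>R x) \<le> g v" by (rule vmax)
      moreover have "g ((1 / c) *\<^sub>R x) = (1 / c) * lp_norm 1 (A *v x)"
        unfolding g_def lp_norm_1 using c by (simp add: mv_scaleR sum_distrib_left)
      ultimately show "lp_norm 1 (A *v x) \<le> g v * lp_norm \<infinity> x"
        using c by (simp add: c_def divide_le_eq mult.commute)
    qed
    have st3: "op_norm \<infinity> 1 A = m powr (inv_exp p) * n powr (1 - inv_exp q) * K"
      using E p q unfolding E_inf1_def K_def m_def n_def by (auto elim!: allE[of _ \<infinity>] allE[of _ 1])
    define N where "N = n powr (1 - inv_exp q)"
    have Np: "N > 0" unfolding N_def using n by simp
    have gv: "g v = lp_norm 1 (A *v v)" unfolding g_def lp_norm_1 ..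
    have c1: "g v \<le> N * lp_norm q (A *v v)"
      unfolding gv N_def n_def using power_mean_lp[OF one1 q1, of "A *v v"] by simp
    have c2: "lp_norm q (A *v v) \<le> K * lp_norm p v" unfolding K_def by (rule op_bound[OF p(1) q1])
    have c3: "lp_norm p v \<le> m powr inv_exp p"
    proof -
      have "(\<Sum>j\<in>UNIV. norm (v $ j) powr p') \<le> (\<Sum>j\<in>(UNIV::'m set). 1)"
        using vB p' unfolding B_def by (intro sum_mono powr_le1) auto
      then have "(\<Sum>j\<in>UNIV. norm (v $ j) powr p') powr (1 / p') \<le> m powr (1 / p')"
        using p' by (intro powr_mono2) (auto intro!: sum_nonneg simp: m_def)
      then show ?thesis using p' by (simp add: lp_norm_fin)
    qed
    have lower: "m powr (inv_exp p) * N * K \<le> g v" using st2 st3 unfolding N_def by (simp add: mult_ac)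
    have NK: "N * K > 0" using Np Kp by simp
    have "m powr (inv_exp p) * (N * K) \<le> lp_norm p v * (N * K)"
    proof -
      have "m powr (inv_exp p) * (N * K) \<le> g v" using lower by (simp add: mult_ac)
      also have "\<dots> \<le> N * (K * lp_norm p v)" using c1 c2 Np by (meson mult_left_mono order_trans less_imp_le)
      finally show ?thesis by (simp add: mult_ac)
    qed
    then have "m powr (inv_exp p) \<le> lp_norm p v" using NK by (rule mult_right_le_imp_le)
    then have Npv: "lp_norm p v = m powr (inv_exp p)" using c3 by simp
    have Lq: "lp_norm q (A *v v) = K * m powr (inv_exp p)"
    proof -
      have "N * lp_norm q (A *v v) \<le> N * (K * m powr (inv_exp p))" using c2 Npv Np by simp
      moreover have "N * (K * m powr (inv_exp p)) \<le> N * lp_norm q (A *v v)"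
        using lower c1 by (simp add: mult_ac)
      ultimately show ?thesis using Np by simp
    qed
    have geq: "g v = N * lp_norm q (A *v v)"
      using lower c1 Lq by (simp add: mult_ac)
    have vj: "norm (v $ j) = 1" for j
    proof -
      define t where "t j = norm (v $ j) powr p'" for j
      have t1: "t j \<le> 1" for j using vB p' unfolding B_def t_def by (intro powr_le1) auto
      have "(\<Sum>j\<in>UNIV. t j) powr (1 / p') = m powr (1 / p')"
        using Npv p' by (simp add: lp_norm_fin t_def)
      then have "((\<Sum>j\<in>UNIV. t j) powr (1 / p')) powr p' = (m powr (1 / p')) powr p'" by simp
      then have "(\<Sum>j\<in>UNIV. t j) = m" using p' m by (simp add: powr_powr t_def sum_nonneg)
      then have "(\<Sum>j\<in>UNIV. 1 - t j) = 0" by (simp add: sum_subtractf m_def)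
      then have "\<forall>j\<in>UNIV. 1 - t j = 0"
        by (subst sum_nonneg_eq_0_iff[symmetric]) (auto simp: t1)
      then have "t j = 1" by simp
      then have "(norm (v $ j) powr p') powr (1 / p') = 1" by (simp add: t_def)
      then show ?thesis using p' by (simp add: powr_powr)
    qed
    define \<tau> where "\<tau> = lp_norm 1 (A *v v) / n"
    have taui: "norm ((A *v v) $ i) = \<tau>" for i
      unfolding \<tau>_def n_def
      by (rule power_mean_eq_1[OF q]) (use geq in \<open>simp add: gv N_def n_def\<close>)
    have t0: "\<tau> \<ge> 0" using taui[of undefined] by (metis norm_ge_zero)
    have "lp_norm q (A *v v) = n powr inv_exp q * \<tau>"
      unfolding n_def by (rule lp_norm_const[OF q1 t0 taui])
    then have tauv: "\<tau> = m powr (inv_exp p) * n powr (- inv_exp q) * K"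
      using Lq n by (simp add: powr_minus field_simps)
    have tpos: "\<tau> > 0" using tauv m n Kp by simp
    define r' where "r' = p' + 1"
    define s' where "s' = (if q = \<infinity> then 2 else (1 + real_of_ereal q) / 2)"
    have r': "r' > 1" "p < ereal r'" unfolding r'_def using p' by auto
    have s'c: "s' > 1 \<and> ereal s' < q"
    proof (cases q)
      case (real q') then show ?thesis using q by (auto simp: s'_def)
    next
      case PInf then show ?thesis by (simp add: s'_def)
    next
      case MInf then show ?thesis using q by simp
    qed
    then have s': "s' > 1" "ereal s' < q" by auto
    have r1: "1 \<le> ereal r'" and s1: "1 \<le> ereal s'" using r' s' by auto
    define L where "L = op_norm (ereal r') (ereal s') A"
    have Lval: "L = m powr (inv_exp p - 1 / r') * n powr (1 / s' - inv_exp q) * K"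
      using E r' s' unfolding E_inf1_def K_def m_def n_def L_def
      by (auto elim!: allE[of _ "ereal r'"] allE[of _ "ereal s'"])
    have L0: "L \<ge> 0" unfolding L_def by (rule op_nonneg[OF r1 s1])
    have bound: "lp_norm (ereal s') (A *v x) \<le> L * lp_norm (ereal r') x" for x
      unfolding L_def by (rule op_bound[OF r1 s1])
    have "lp_norm (ereal s') (A *v v) = n powr (1 / s') * \<tau>"
      using lp_norm_const[OF s1 t0 taui] by (simp add: n_def)
    moreover have "lp_norm (ereal r') v = m powr (1 / r')"
      using lp_norm_const[OF r1, of 1 v] vj by (simp add: m_def)
    moreover have "n powr (1 / s') * \<tau> = L * m powr (1 / r')"
      unfolding Lval tauv using m n by (simp add: powr_diff powr_minus divide_inverse mult_ac)
    ultimately have attain: "lp_norm (ereal s') (A *v v) \<ge> L * lp_norm (ereal r') v" by simp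
    obtain c where "\<forall>w. inner (A *v v) (A *v w) = c * inner v w"
      using stationary[OF r'(1) s'(1) vj taui tpos L0 bound attain] by blast
    then show ?thesis using vj taui tauv unfolding K_def m_def n_def by blast
  qed
qed



lemma ofreal_smult: "(of_real c :: 'a::real_normed_field) *s (v :: 'a^'m) = c *\<^sub>R v"
  unfolding vec_eq_iff by (simp add: scaleR_conv_of_real[where 'a='a])

lemma lp_norm_2e: "lp_norm (ereal 2) (x :: ('a::real_normed_vector)^'n) = norm x"
  using lp_norm_2[of x] by simp

lemma G1:
  fixes A :: "('a::{euclidean_space,real_normed_field})^'m^'n" and M :: "'a^'m^'m"
  assumes adj: "\<And>x w. inner (A *v x) (A *v w) = inner (M *v x) w"
    and h: "\<forall>w. inner (A *v v) (A *v w) = c * inner v w"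
  shows "M *v v = of_real c *s v"
proof -
  have "inner (M *v v - c *\<^sub>R v) w = 0" for w
    using h adj[of v w] by (simp add: inner_diff_left)
  then have "M *v v - c *\<^sub>R v = 0" by (metis inner_eq_zero_iff)
  then show ?thesis by (simp add: ofreal_smult)
qed

lemma G2:
  fixes A :: "('a::{euclidean_space,real_normed_field})^'m^'n" and M :: "'a^'m^'m"
  assumes adj: "\<And>x w. inner (A *v x) (A *v w) = inner (M *v x) w"
    and scal: "\<And>d (w::'a^'m). inner (d *s w) w = ev d * inner w w"
    and e: "M *v w = d *s w"
  shows "(norm (A *v w))\<^sup>2 = ev d * (norm w)\<^sup>2"
  using adj[of w w] scal[of d w] e by (simp add: power2_norm_eq_inner)

lemma part1_generic:
  fixes A :: "('a::{euclidean_space,real_normed_field})^'m^'n" and M :: "'a^'m^'m"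
  assumes adj: "\<And>x w. inner (A *v x) (A *v w) = inner (M *v x) w"
    and p: "1 \<le> p" "p < \<infinity>" and q: "1 < q"
  shows "E_inf1 p q A \<longleftrightarrow>
        (\<exists>v. is_eigvec M v \<and> (\<forall>j. norm (v $ j) = 1) \<and>
             (\<exists>\<tau>. (\<forall>i. norm ((A *v v) $ i) = \<tau>) \<and>
                  \<tau> = real CARD('m) powr (inv_exp p) * real CARD('n) powr (- inv_exp q)
                       * op_norm p q A))"
proof
  assume E: "E_inf1 p q A"
  obtain v c where v: "\<forall>j. norm (v $ j) = 1"
    and t: "\<forall>i. norm ((A *v v) $ i) = real CARD('m) powr (inv_exp p) * real CARD('n) powr (- inv_exp q) * op_norm p q A"
    and h: "\<forall>w. inner (A *v v) (A *v w) = c * inner v w"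
    using forward[OF p q E] by blast
  have "v \<noteq> 0" using v by (metis norm_zero zero_index zero_neq_one)
  moreover have "M *v v = of_real c *s v" by (rule G1[OF adj h])
  ultimately have "is_eigvec M v" unfolding is_eigvec_def by blast
  then show "\<exists>v. is_eigvec M v \<and> (\<forall>j. norm (v $ j) = 1) \<and>
             (\<exists>\<tau>. (\<forall>i. norm ((A *v v) $ i) = \<tau>) \<and>
                  \<tau> = real CARD('m) powr (inv_exp p) * real CARD('n) powr (- inv_exp q)
                       * op_norm p q A)" using v t by blast
next
  assume "\<exists>v. is_eigvec M v \<and> (\<forall>j. norm (v $ j) = 1) \<and>
             (\<exists>\<tau>. (\<forall>i. norm ((A *v v) $ i) = \<tau>) \<and>
                  \<tau> = real CARD('m) powr (inv_exp p) * real CARD('n) powr (- inv_exp q)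
                       * op_norm p q A)"
  then obtain v \<tau> where v: "\<And>j. norm (v $ j) = 1" and t: "\<And>i. norm ((A *v v) $ i) = \<tau>"
    and tv: "\<tau> = real CARD('m) powr (inv_exp p) * real CARD('n) powr (- inv_exp q) * op_norm p q A"
    by blast
  show "E_inf1 p q A" by (rule backward[OF p(1) q v t tv])
qed

lemma part2_generic:
  fixes A :: "('a::{euclidean_space,real_normed_field})^'m^'n" and M :: "'a^'m^'m"
  assumes adj: "\<And>x w. inner (A *v x) (A *v w) = inner (M *v x) w"
    and scal: "\<And>d (w::'a^'m). inner (d *s w) w = ev d * inner w w"
    and evr: "\<And>x. ev (of_real x) = x"
  shows "E_inf1 2 2 A \<longleftrightarrow>
        (\<exists>v c. v \<noteq> 0 \<and> M *v v = c *s v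
             \<and> (\<forall>d w. w \<noteq> 0 \<and> M *v w = d *s w \<longrightarrow> ev d \<le> ev c)
             \<and> (\<forall>j. norm (v $ j) = 1) \<and> (\<exists>\<tau>. \<forall>i. norm ((A *v v) $ i) = \<tau>))"
proof -
  define K where "K = op_norm 2 2 A"
  define m where "m = real CARD('m)"
  define n where "n = real CARD('n)"
  have m: "m > 0" and n: "n > 0" unfolding m_def n_def by simp_all
  have one2: "(1::ereal) \<le> 2" by simp
  have K0: "K \<ge> 0" unfolding K_def by (rule op_nonneg) simp_all
  have bound: "norm (A *v x) \<le> K * norm x" for x
  proof -
    have "lp_norm 2 (A *v x) \<le> op_norm 2 2 A * lp_norm 2 x" by (rule op_bound) simp_all
    then show ?thesis by (simp only: lp_norm_2 K_def)
  qed
  have ev_le: "ev d \<le> K\<^sup>2" if "w \<noteq> 0" "M *v w = d *s w" for d w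
  proof -
    have "ev d * (norm w)\<^sup>2 = (norm (A *v w))\<^sup>2" using G2[OF adj scal that(2)] by simp
    also have "\<dots> \<le> (K * norm w)\<^sup>2" using bound[of w] by (simp add: power_mono)
    finally have "ev d * (norm w)\<^sup>2 \<le> K\<^sup>2 * (norm w)\<^sup>2" by (simp add: power_mult_distrib)
    then show ?thesis using that(1) by simp
  qed
  have normv: "norm v = sqrt m" if "\<And>j. norm (v $ j) = 1" for v :: "'a^'m"
  proof -
    have "lp_norm 2 v = m powr inv_exp 2 * 1" unfolding m_def by (rule lp_norm_const) (simp_all add: that)
    then show ?thesis using m n by (simp add: lp_norm_2e inv_exp_def powr_half_sqrt)
  qed
  have normAv: "norm (A *v v) = sqrt n * \<tau>" if "\<And>i. norm ((A *v v) $ i) = \<tau>" "\<tau> \<ge> 0" for v \<tau>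
  proof -
    have "lp_norm 2 (A *v v) = n powr inv_exp 2 * \<tau>" unfolding n_def by (rule lp_norm_const) (simp_all add: that)
    then show ?thesis using m n by (simp add: lp_norm_2e inv_exp_def powr_half_sqrt)
  qed
  have tau2: "real CARD('m) powr inv_exp 2 * real CARD('n) powr - inv_exp 2 * op_norm 2 2 A = sqrt m / sqrt n * K"
  proof -
    have i2: "inv_exp 2 = 1 / 2" by (simp add: inv_exp_def)
    have hm: "m powr (1/2) = sqrt m" and hn: "n powr (1/2) = sqrt n" using m n by (simp_all add: powr_half_sqrt)
    show ?thesis unfolding i2 powr_minus m_def[symmetric] n_def[symmetric] K_def[symmetric]
      by (simp only: hm hn) (simp only: divide_inverse)
  qed
  have p2: "(1::ereal) \<le> 2" "(2::ereal) < \<infinity>" "(1::ereal) < 2" by simp_all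
  show ?thesis
  proof
    assume E: "E_inf1 2 2 A"
    obtain v c where v: "\<forall>j. norm (v $ j) = 1"
      and t: "\<forall>i. norm ((A *v v) $ i) = real CARD('m) powr (inv_exp 2) * real CARD('n) powr (- inv_exp 2) * op_norm 2 2 A"
      and h: "\<forall>w. inner (A *v v) (A *v w) = c * inner v w"
      using forward[OF p2 E] by blast
    define \<tau> where "\<tau> = sqrt m / sqrt n * K"
    have t': "\<And>i. norm ((A *v v) $ i) = \<tau>" using t tau2 \<tau>_def by simp
    have t0: "\<tau> \<ge> 0" unfolding \<tau>_def using K0 m n by simp
    have vne: "v \<noteq> 0" using v by (metis norm_zero zero_index zero_neq_one)
    have eig: "M *v v = of_real c *s v" by (rule G1[OF adj h])
    have "c * m = (norm (A *v v))\<^sup>2"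
      using G2[OF adj scal eig] normv[of v] v m evr by simp
    also have "\<dots> = m * K\<^sup>2"
      using normAv[OF t' t0] n m unfolding \<tau>_def by (simp add: power_mult_distrib power_divide)
    finally have cK: "c = K\<^sup>2" using m by simp
    have "\<forall>d w. w \<noteq> 0 \<and> M *v w = d *s w \<longrightarrow> ev d \<le> ev (of_real c)"
      by (metis ev_le evr cK)
    then show "\<exists>v c. v \<noteq> 0 \<and> M *v v = c *s v
             \<and> (\<forall>d w. w \<noteq> 0 \<and> M *v w = d *s w \<longrightarrow> ev d \<le> ev c)
             \<and> (\<forall>j. norm (v $ j) = 1) \<and> (\<exists>\<tau>. \<forall>i. norm ((A *v v) $ i) = \<tau>)"
      using vne eig v t' by blast
  next
    assume "\<exists>v c. v \<noteq> 0 \<and> M *v v = c *s v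
             \<and> (\<forall>d w. w \<noteq> 0 \<and> M *v w = d *s w \<longrightarrow> ev d \<le> ev c)
             \<and> (\<forall>j. norm (v $ j) = 1) \<and> (\<exists>\<tau>. \<forall>i. norm ((A *v v) $ i) = \<tau>)"
    then obtain v c \<tau> where eig: "M *v v = c *s v"
      and mx: "\<And>d w. w \<noteq> 0 \<Longrightarrow> M *v w = d *s w \<Longrightarrow> ev d \<le> ev c"
      and v: "\<And>j. norm (v $ j) = 1" and t: "\<And>i. norm ((A *v v) $ i) = \<tau>"
      by blast
    have t0: "\<tau> \<ge> 0" using t[of undefined] by (metis norm_ge_zero)
    obtain x0 where x0: "x0 \<noteq> 0" "\<forall>w. inner (A *v x0) (A *v w) = K\<^sup>2 * inner x0 w"
      using rayleigh[of A] unfolding K_def by blast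
    have "M *v x0 = of_real (K\<^sup>2) *s x0" by (rule G1[OF adj x0(2)])
    then have "K\<^sup>2 \<le> ev c" using mx[OF x0(1)] evr by metis
    moreover have "ev c \<le> K\<^sup>2"
      using ev_le[of v c] eig v by (metis norm_zero zero_index zero_neq_one)
    ultimately have cK: "ev c = K\<^sup>2" by simp
    have "n * \<tau>\<^sup>2 = (norm (A *v v))\<^sup>2" using normAv[OF t t0] n by (simp add: power_mult_distrib)
    also have "\<dots> = ev c * m" using G2[OF adj scal eig] normv[of v] v m by simp
    finally have "\<tau>\<^sup>2 = (sqrt m / sqrt n * K)\<^sup>2"
      using cK m n by (simp add: power_mult_distrib power_divide field_simps)
    then have "\<tau> = sqrt m / sqrt n * K"
      using t0 K0 m n by (simp add: power2_eq_iff_nonneg)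
    then have tv: "\<tau> = real CARD('m) powr (inv_exp 2) * real CARD('n) powr (- inv_exp 2) * op_norm 2 2 A"
      using tau2 by simp
    show "E_inf1 2 2 A" by (rule backward[OF p2(1) p2(3) v t tv])
  qed
qed



lemma adj_real:
  fixes A :: "real^'m^'n"
  shows "inner (A *v x) (A *v w) = inner ((transpose A ** A) *v x) w"
proof -
  have "inner (A *v x) (A *v w) = inner ((A *v x) v* A) w" by (simp add: dot_lmul_matrix)
  also have "(A *v x) v* A = transpose A *v (A *v x)"
    using vector_transpose_matrix[where x = "A *v x" and A = "transpose A"] by simp
  also have "\<dots> = (transpose A ** A) *v x" by (simp add: matrix_vector_mul_assoc)
  finally show ?thesis .
qed

lemma scal_real: "inner (d *s (w :: real^'m)) w = d * inner w w"
  by (simp add: inner_vec_def sum_distrib_left mult_ac)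

lemma cinner_el: "inner (a::complex) b = Re (cnj a * b)"
  by (simp add: inner_complex_def)

lemma cinner: "inner (x :: complex^'m) y = Re (\<Sum>i\<in>UNIV. cnj (x $ i) * y $ i)"
  by (simp add: inner_vec_def cinner_el)

lemma cadj_sum:
  fixes A :: "complex^'m^'n"
  shows "(\<Sum>k\<in>UNIV. cnj ((cadjoint A *v y) $ k) * w $ k) = (\<Sum>i\<in>UNIV. cnj (y $ i) * (A *v w) $ i)"
proof -
  have "(\<Sum>k\<in>UNIV. cnj ((cadjoint A *v y) $ k) * w $ k) = (\<Sum>k\<in>UNIV. \<Sum>i\<in>UNIV. cnj (y $ i) * (A $ i $ k * w $ k))"
    by (simp add: matrix_vector_mult_def cadjoint_def cnj_sum sum_distrib_right sum_distrib_left mult_ac)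
  also have "\<dots> = (\<Sum>i\<in>UNIV. \<Sum>k\<in>UNIV. cnj (y $ i) * (A $ i $ k * w $ k))" by (rule sum.swap)
  also have "\<dots> = (\<Sum>i\<in>UNIV. cnj (y $ i) * (A *v w) $ i)"
    by (simp add: matrix_vector_mult_def sum_distrib_left)
  finally show ?thesis .
qed

lemma adj_cplx:
  fixes A :: "complex^'m^'n"
  shows "inner (A *v x) (A *v w) = inner ((cadjoint A ** A) *v x) w"
  unfolding cinner matrix_vector_mul_assoc[symmetric] cadj_sum ..

lemma scal_cplx: "inner (d *s (w :: complex^'m)) w = Re d * inner w w"
proof -
  have "inner (d * a) a = Re d * inner a a" for a :: complex
    by (simp add: inner_complex_def algebra_simps)
  then show ?thesis by (simp add: inner_vec_def sum_distrib_left)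
qed



theorem theorem6:
  shows
  \<comment> \<open>F = R\<close>
  "(\<forall>(A::real^'m^'n) (p::ereal) (q::ereal). 1 \<le> p \<and> p < \<infinity> \<and> 1 < q \<and> q \<le> \<infinity> \<longrightarrow>
      (E_inf1 p q A \<longleftrightarrow>
        (\<exists>v. is_eigvec (transpose A ** A) v \<and> (\<forall>j. norm (v $ j) = 1) \<and>
             (\<exists>\<tau>. (\<forall>i. norm ((A *v v) $ i) = \<tau>) \<and>
                  \<tau> = real CARD('m) powr (inv_exp p) * real CARD('n) powr (- inv_exp q)
                       * op_norm p q A))))
   \<and> (\<forall>A::real^'m^'n.
      E_inf1 2 2 A \<longleftrightarrow>
        (\<exists>v c. v \<noteq> 0 \<and> (transpose A ** A) *v v = c *s v
             \<and> (\<forall>d w. w \<noteq> 0 \<and> (transpose A ** A) *v w = d *s w \<longrightarrow> d \<le> c)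
             \<and> (\<forall>j. norm (v $ j) = 1) \<and> (\<exists>\<tau>. \<forall>i. norm ((A *v v) $ i) = \<tau>)))
   \<and>
  \<comment> \<open>F = C\<close>
   (\<forall>(A::complex^'m^'n) (p::ereal) (q::ereal). 1 \<le> p \<and> p < \<infinity> \<and> 1 < q \<and> q \<le> \<infinity> \<longrightarrow>
      (E_inf1 p q A \<longleftrightarrow>
        (\<exists>v. is_eigvec (cadjoint A ** A) v \<and> (\<forall>j. norm (v $ j) = 1) \<and>
             (\<exists>\<tau>. (\<forall>i. norm ((A *v v) $ i) = \<tau>) \<and>
                  \<tau> = real CARD('m) powr (inv_exp p) * real CARD('n) powr (- inv_exp q)
                       * op_norm p q A))))
   \<and> (\<forall>A::complex^'m^'n.
      E_inf1 2 2 A \<longleftrightarrow>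
        (\<exists>v c. v \<noteq> 0 \<and> (cadjoint A ** A) *v v = c *s v
             \<and> (\<forall>d w. w \<noteq> 0 \<and> (cadjoint A ** A) *v w = d *s w \<longrightarrow> Re d \<le> Re c)
             \<and> (\<forall>j. norm (v $ j) = 1) \<and> (\<exists>\<tau>. \<forall>i. norm ((A *v v) $ i) = \<tau>)))"
proof (intro conjI allI impI)
  fix A :: "real^'m^'n" and p q :: ereal
  assume "1 \<le> p \<and> p < \<infinity> \<and> 1 < q \<and> q \<le> \<infinity>"
  then show "E_inf1 p q A \<longleftrightarrow>
        (\<exists>v. is_eigvec (transpose A ** A) v \<and> (\<forall>j. norm (v $ j) = 1) \<and>
             (\<exists>\<tau>. (\<forall>i. norm ((A *v v) $ i) = \<tau>) \<and>
                  \<tau> = real CARD('m) powr (inv_exp p) * real CARD('n) powr (- inv_exp q)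
                       * op_norm p q A))"
    by (intro part1_generic adj_real) auto
next
  fix A :: "real^'m^'n"
  show "E_inf1 2 2 A \<longleftrightarrow>
        (\<exists>v c. v \<noteq> 0 \<and> (transpose A ** A) *v v = c *s v
             \<and> (\<forall>d w. w \<noteq> 0 \<and> (transpose A ** A) *v w = d *s w \<longrightarrow> d \<le> c)
             \<and> (\<forall>j. norm (v $ j) = 1) \<and> (\<exists>\<tau>. \<forall>i. norm ((A *v v) $ i) = \<tau>))"
    using part2_generic[where A = A and M = "transpose A ** A" and ev = "\<lambda>x. x", OF adj_real scal_real]
    by simp
next
  fix A :: "complex^'m^'n" and p q :: ereal
  assume "1 \<le> p \<and> p < \<infinity> \<and> 1 < q \<and> q \<le> \<infinity>"
  then show "E_inf1 p q A \<longleftrightarrow>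
        (\<exists>v. is_eigvec (cadjoint A ** A) v \<and> (\<forall>j. norm (v $ j) = 1) \<and>
             (\<exists>\<tau>. (\<forall>i. norm ((A *v v) $ i) = \<tau>) \<and>
                  \<tau> = real CARD('m) powr (inv_exp p) * real CARD('n) powr (- inv_exp q)
                       * op_norm p q A))"
    by (intro part1_generic adj_cplx) auto
next
  fix A :: "complex^'m^'n"
  show "E_inf1 2 2 A \<longleftrightarrow>
        (\<exists>v c. v \<noteq> 0 \<and> (cadjoint A ** A) *v v = c *s v
             \<and> (\<forall>d w. w \<noteq> 0 \<and> (cadjoint A ** A) *v w = d *s w \<longrightarrow> Re d \<le> Re c)
             \<and> (\<forall>j. norm (v $ j) = 1) \<and> (\<exists>\<tau>. \<forall>i. norm ((A *v v) $ i) = \<tau>))"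
    by (rule part2_generic[where A = A and M = "cadjoint A ** A" and ev = Re, OF adj_cplx scal_cplx]) simp
qed


end
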